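(* Let $A$ be a Noetherian ring, $I$ an ideal of $A$ with system of generators $(y_1,\ldots,y_m)$, and $\hat A$ the $I$-adic completion of $A$. Let $B$ be a subring of $A$ such that $y_1,\ldots,y_m\in B$ and $y_1,\ldots,y_m$ generate the ideal $B\cap I$ of $B$. Then, in $\hat A$, every element $f\in B$ can be written as $$f=\sum_{\beta\in\mathbb{Z}^m_{\geqslant0}}c_\beta\,y^\beta$$ with all coefficients $c_\beta\in((A\setminus I)\cap B)\cup\{0\}$.
   Context: $y^\beta=y_1^{\beta_1}\cdots y_m^{\beta_m}$; the series converges $I$-adically in $\hat A$. *)

theory Defs
  imports Main
begin

text \<open>Ideals of a subring B (given as a subset of the ambient commutative ring).
  Ideals of the whole ring are the case B = UNIV.\<close>
definition is_ideal_in :: "'a::comm_ring_1 set \<Rightarrow> 'a set \<Rightarrow> bool" where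
  "is_ideal_in B J \<longleftrightarrow> J \<subseteq> B \<and> 0 \<in> J \<and> (\<forall>x\<in>J. \<forall>y\<in>J. x + y \<in> J)
      \<and> (\<forall>b\<in>B. \<forall>x\<in>J. b * x \<in> J)"

definition ideal_gen_in :: "'a::comm_ring_1 set \<Rightarrow> 'a set \<Rightarrow> 'a set" where
  "ideal_gen_in B S = \<Inter>{J. is_ideal_in B J \<and> S \<subseteq> J}"

definition is_subring :: "'a::comm_ring_1 set \<Rightarrow> bool" where
  "is_subring B \<longleftrightarrow> 0 \<in> B \<and> 1 \<in> B \<and> (\<forall>x\<in>B. \<forall>y\<in>B. x + y \<in> B \<and> x * y \<in> B)
      \<and> (\<forall>x\<in>B. - x \<in> B)"

definition noetherian_ring :: "'a::comm_ring_1 itself \<Rightarrow> bool" where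
  "noetherian_ring _ \<longleftrightarrow>
     (\<forall>J::'a set. is_ideal_in UNIV J \<longrightarrow> (\<exists>S. finite S \<and> J = ideal_gen_in UNIV S))"

fun ideal_pow :: "'a::comm_ring_1 set \<Rightarrow> nat \<Rightarrow> 'a set" where
  "ideal_pow I 0 = UNIV"
| "ideal_pow I (Suc n) = ideal_gen_in UNIV {a * b | a b. a \<in> I \<and> b \<in> ideal_pow I n}"

text \<open>Multi-indices in Z_{>=0}^m, represented as functions vanishing from m on.\<close>
definition multiidx :: "nat \<Rightarrow> (nat \<Rightarrow> nat) set" where
  "multiidx m = {\<beta>. \<forall>i\<ge>m. \<beta> i = 0}"

definition monom_pow :: "nat \<Rightarrow> (nat \<Rightarrow> 'a::comm_ring_1) \<Rightarrow> (nat \<Rightarrow> nat) \<Rightarrow> 'a" where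
  "monom_pow m y \<beta> = (\<Prod>i<m. y i ^ \<beta> i)"

text \<open>The family (t x) over X sums I-adically to f in the I-adic completion:
  the net of finite partial sums converges to (the image of) f, i.e. for every n
  the finite partial sums are eventually congruent to f modulo I^n
  (the topology of the completion is given by the kernels of the maps to A/I^n).\<close>
definition adic_has_sum :: "'a::comm_ring_1 set \<Rightarrow> ('b \<Rightarrow> 'a) \<Rightarrow> 'b set \<Rightarrow> 'a \<Rightarrow> bool" where
  "adic_has_sum I t X f \<longleftrightarrow>
     (\<forall>n. \<exists>F0. finite F0 \<and> F0 \<subseteq> X \<and>
        (\<forall>F. finite F \<and> F0 \<subseteq> F \<and> F \<subseteq> X \<longrightarrow> f - sum t F \<in> ideal_pow I n))"

end

theory Submission
  imports Defs
begin

lemma ideal_genI: "x \<in> S \<Longrightarrow> x \<in> ideal_gen_in B S"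
  unfolding ideal_gen_in_def by blast

lemma ideal_gen_least: "is_ideal_in B J \<Longrightarrow> S \<subseteq> J \<Longrightarrow> ideal_gen_in B S \<subseteq> J"
  unfolding ideal_gen_in_def by blast

lemma ideal_gen_mono: "S \<subseteq> T \<Longrightarrow> ideal_gen_in B S \<subseteq> ideal_gen_in B T"
  unfolding ideal_gen_in_def by blast

lemma ideal_gen_ideal: "is_ideal_in UNIV (ideal_gen_in UNIV S)"
  unfolding is_ideal_in_def ideal_gen_in_def by auto

lemma ideal_pow_ideal: "is_ideal_in UNIV (ideal_pow I n)"
proof (cases n)
  case 0 then show ?thesis by (simp add: is_ideal_in_def)
next
  case (Suc k) then show ?thesis by (simp add: ideal_gen_ideal)
qed

lemma ideal_add: "is_ideal_in UNIV J \<Longrightarrow> x \<in> J \<Longrightarrow> z \<in> J \<Longrightarrow> x + z \<in> J"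
  unfolding is_ideal_in_def by blast
lemma ideal_mult: "is_ideal_in UNIV J \<Longrightarrow> x \<in> J \<Longrightarrow> a * x \<in> J"
  unfolding is_ideal_in_def by blast
lemma ideal_mult2: "is_ideal_in UNIV J \<Longrightarrow> x \<in> J \<Longrightarrow> x * a \<in> J"
  unfolding is_ideal_in_def by (metis UNIV_I mult.commute)
lemma ideal_zero: "is_ideal_in UNIV J \<Longrightarrow> 0 \<in> J"
  unfolding is_ideal_in_def by blast
lemma ideal_diff: "is_ideal_in UNIV J \<Longrightarrow> x \<in> J \<Longrightarrow> z \<in> J \<Longrightarrow> x - z \<in> J"
proof -
  assume a: "is_ideal_in UNIV J" "x \<in> J" "z \<in> J"
  have "x + (-1) * z \<in> J" using a by (intro ideal_add ideal_mult)
  thus ?thesis by simp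
qed
lemma ideal_sum: "is_ideal_in UNIV J \<Longrightarrow> (\<forall>x\<in>A. g x \<in> J) \<Longrightarrow> sum g A \<in> J"
proof (induction A rule: infinite_finite_induct)
  case (infinite A) then show ?case by (simp add: ideal_zero)
next
  case empty then show ?case by (simp add: ideal_zero)
next
  case (insert x F) then show ?case by (simp add: ideal_add)
qed

lemma subring_sum: "is_subring B \<Longrightarrow> (\<forall>x\<in>A. g x \<in> B) \<Longrightarrow> sum g A \<in> B"
proof (induction A rule: infinite_finite_induct)
  case (infinite A) then show ?case by (simp add: is_subring_def)
next
  case empty then show ?case by (simp add: is_subring_def)
next
  case (insert x F) then show ?case by (simp add: is_subring_def)
qed

lemma ideal_pow_Suc_sub: "ideal_pow I (Suc n) \<subseteq> ideal_pow I n"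
proof (induction n)
  case 0 show ?case by simp
next
  case (Suc n)
  have "{a * b |a b. a \<in> I \<and> b \<in> ideal_pow I (Suc n)} \<subseteq> {a * b |a b. a \<in> I \<and> b \<in> ideal_pow I n}"
    using Suc by blast
  from ideal_gen_mono[OF this, of UNIV] show ?case by (simp only: ideal_pow.simps(2))
qed

lemma ideal_pow_anti: assumes "k \<le> n" shows "ideal_pow I n \<subseteq> ideal_pow I k"
  using assms proof (induction rule: dec_induct)
  case base show ?case by simp
next
  case (step n) thus ?case using ideal_pow_Suc_sub[of I n] by blast
qed

lemma ideal_pow_mult_Suc: "a \<in> I \<Longrightarrow> x \<in> ideal_pow I k \<Longrightarrow> a * x \<in> ideal_pow I (Suc k)"
  unfolding ideal_pow.simps(2) by (rule ideal_genI) blast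

lemma ideal_pow_power: "a \<in> I \<Longrightarrow> x \<in> ideal_pow I j \<Longrightarrow> a ^ p * x \<in> ideal_pow I (p + j)"
proof (induction p)
  case 0 then show ?case by simp
next
  case (Suc p)
  have "a * (a ^ p * x) \<in> ideal_pow I (Suc (p + j))" using Suc by (intro ideal_pow_mult_Suc) auto
  thus ?case by (simp add: mult.assoc)
qed

lemma prod_in_pow: "(\<forall>i<(k::nat). y i \<in> I) \<Longrightarrow> (\<Prod>i<k. y i ^ \<beta> i) \<in> ideal_pow I (\<Sum>i<k. \<beta> i)"
proof (induction k arbitrary: \<beta>)
  case 0 show ?case by simp
next
  case (Suc k)
  hence h: "(\<Prod>i<k. y i ^ \<beta> i) \<in> ideal_pow I (\<Sum>i<k. \<beta> i)" by simp
  have "y k ^ \<beta> k * (\<Prod>i<k. y i ^ \<beta> i) \<in> ideal_pow I (\<beta> k + (\<Sum>i<k. \<beta> i))"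
    using ideal_pow_power[OF _ h] Suc.prems by simp
  moreover have eq1: "(\<Prod>i<Suc k. y i ^ \<beta> i) = y k ^ \<beta> k * (\<Prod>i<k. y i ^ \<beta> i)"
    by (simp add: mult.commute)
  moreover have eq2: "(\<Sum>i<Suc k. \<beta> i) = \<beta> k + (\<Sum>i<k. \<beta> i)" by simp
  ultimately show ?case by metis
qed

lemma memJ: "\<forall>i<(m::nat). g i \<in> B \<Longrightarrow> x = (\<Sum>i<m. g i * y i) \<Longrightarrow> x \<in> {\<Sum>i<m. g i * y i | g. \<forall>i<m. g i \<in> B}"
  by blast

lemma gen_repr:
  assumes sub: "is_subring B" and yB: "\<forall>i<(m::nat). y i \<in> B"
  shows "ideal_gen_in B (y ` {..<m}) \<subseteq> {\<Sum>i<m. g i * y i | g. \<forall>i<m. g i \<in> B}"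
proof (rule ideal_gen_least)
  let ?J = "{\<Sum>i<m. g i * y i | g. \<forall>i<m. g i \<in> B}"
  show "y ` {..<m} \<subseteq> ?J"
  proof
    fix x assume "x \<in> y ` {..<m}"
    then obtain j where j: "j < m" "x = y j" by auto
    have "(\<Sum>i<m. (if i = j then 1 else 0) * y i) = (\<Sum>i<m. if i = j then y i else 0)"
      by (rule sum.cong) auto
    also have "\<dots> = y j" using j by (subst sum.delta) auto
    finally have "x = (\<Sum>i<m. (\<lambda>i. if i = j then 1 else 0) i * y i)" using j by simp
    moreover have "\<forall>i<m. (\<lambda>i. if i = j then (1::'a) else 0) i \<in> B" using sub by (simp add: is_subring_def)
    ultimately show "x \<in> ?J" by (intro memJ[of m "\<lambda>i. if i = j then 1 else 0"])
  qed
  show "is_ideal_in B ?J"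
    unfolding is_ideal_in_def
  proof (intro conjI ballI)
    show "?J \<subseteq> B"
    proof
      fix x assume "x \<in> ?J"
      then obtain g where "\<forall>i<m. g i \<in> B" "x = (\<Sum>i<m. g i * y i)" by blast
      thus "x \<in> B" using sub yB by (auto intro!: subring_sum simp: is_subring_def)
    qed
    have "(0::'a) = (\<Sum>i<m. (\<lambda>i. 0) i * y i)" by simp
    moreover have "\<forall>i<m. (\<lambda>i. 0::'a) i \<in> B" using sub by (simp add: is_subring_def)
    ultimately show "0 \<in> ?J" by (intro memJ[of m "\<lambda>i. 0"])
  next
    fix x z assume "x \<in> ?J" "z \<in> ?J"
    then obtain g h where g: "\<forall>i<m. g i \<in> B" "x = (\<Sum>i<m. g i * y i)"
      and h: "\<forall>i<m. h i \<in> B" "z = (\<Sum>i<m. h i * y i)" by blast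
    have "x + z = (\<Sum>i<m. (\<lambda>i. g i + h i) i * y i)"
      using g h by (simp add: sum.distrib distrib_right)
    moreover have "\<forall>i<m. (\<lambda>i. g i + h i) i \<in> B" using g h sub by (simp add: is_subring_def)
    ultimately show "x + z \<in> ?J" by (intro memJ[of m "\<lambda>i. g i + h i"])
  next
    fix b x assume b: "b \<in> B" and "x \<in> ?J"
    then obtain g where g: "\<forall>i<m. g i \<in> B" "x = (\<Sum>i<m. g i * y i)" by blast
    have "b * x = (\<Sum>i<m. (\<lambda>i. b * g i) i * y i)"
      using g by (simp add: sum_distrib_left mult.assoc)
    moreover have "\<forall>i<m. (\<lambda>i. b * g i) i \<in> B" using g b sub by (simp add: is_subring_def)
    ultimately show "b * x \<in> ?J" by (intro memJ[of m "\<lambda>i. b * g i"])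
  qed
qed


definition deg :: "nat \<Rightarrow> (nat \<Rightarrow> nat) \<Rightarrow> nat" where "deg m \<beta> = (\<Sum>i<m. \<beta> i)"
definition Dset :: "nat \<Rightarrow> nat \<Rightarrow> (nat \<Rightarrow> nat) set" where "Dset m n = {\<beta> \<in> multiidx m. deg m \<beta> = n}"
definition Eset :: "nat \<Rightarrow> nat \<Rightarrow> (nat \<Rightarrow> nat) set" where "Eset m n = {\<beta> \<in> multiidx m. deg m \<beta> < n}"
definition dval :: "'a::comm_ring_1 set \<Rightarrow> 'a \<Rightarrow> 'a" where "dval I x = (if x \<in> I then x else 0)"
definition cval :: "'a::comm_ring_1 set \<Rightarrow> 'a \<Rightarrow> 'a" where "cval I x = (if x \<in> I then 0 else x)"

fun bseq :: "'a::comm_ring_1 set \<Rightarrow> nat \<Rightarrow> ('a \<Rightarrow> nat \<Rightarrow> 'a) \<Rightarrow> 'a \<Rightarrow> nat \<Rightarrow> (nat \<Rightarrow> nat) \<Rightarrow> 'a" where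
  "bseq I m G f 0 = (\<lambda>\<beta>. if \<beta> = (\<lambda>_. 0) then f else 0)"
| "bseq I m G f (Suc n) = (\<lambda>\<gamma>. \<Sum>\<beta>\<in>Dset m n. \<Sum>i<m.
      if \<beta>(i := Suc (\<beta> i)) = \<gamma> then G (dval I (bseq I m G f n \<beta>)) i else 0)"

lemma finite_bounded: "finite {\<beta>::nat\<Rightarrow>nat. (\<forall>i\<ge>m. \<beta> i = 0) \<and> (\<forall>i. \<beta> i \<le> N)}"
proof -
  have "{\<beta>::nat\<Rightarrow>nat. (\<forall>i\<ge>m. \<beta> i = 0) \<and> (\<forall>i. \<beta> i \<le> N)}
     \<subseteq> (\<lambda>xs i. if i < m then xs ! i else 0) ` {xs. set xs \<subseteq> {..N} \<and> length xs = m}"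
  proof
    fix \<beta> assume h: "\<beta> \<in> {\<beta>::nat\<Rightarrow>nat. (\<forall>i\<ge>m. \<beta> i = 0) \<and> (\<forall>i. \<beta> i \<le> N)}"
    show "\<beta> \<in> (\<lambda>xs i. if i < m then xs ! i else 0) ` {xs. set xs \<subseteq> {..N} \<and> length xs = m}"
    proof (rule image_eqI[where x="map \<beta> [0..<m]"])
      show "\<beta> = (\<lambda>i. if i < m then map \<beta> [0..<m] ! i else 0)"
      proof
        fix i show "\<beta> i = (if i < m then map \<beta> [0..<m] ! i else 0)"
          using h by (cases "i < m") auto
      qed
      show "map \<beta> [0..<m] \<in> {xs. set xs \<subseteq> {..N} \<and> length xs = m}"
        using h by auto
    qed
  qed
  moreover have "finite {xs. set xs \<subseteq> {..N} \<and> length xs = m}"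
    by (rule finite_lists_length_eq) simp
  ultimately show ?thesis by (meson finite_imageI finite_subset)
qed

lemma le_deg: "i < m \<Longrightarrow> \<beta> i \<le> deg m \<beta>"
  unfolding deg_def by (rule member_le_sum) auto

lemma bounded_deg: "\<beta> \<in> multiidx m \<Longrightarrow> deg m \<beta> \<le> N \<Longrightarrow> \<beta> \<in> {\<beta>::nat\<Rightarrow>nat. (\<forall>i\<ge>m. \<beta> i = 0) \<and> (\<forall>i. \<beta> i \<le> N)}"
proof -
  assume a: "\<beta> \<in> multiidx m" "deg m \<beta> \<le> N"
  have "\<beta> i \<le> N" for i
  proof (cases "i < m")
    case True thus ?thesis using le_deg[OF True, of \<beta>] a by linarith
  next
    case False thus ?thesis using a by (simp add: multiidx_def)
  qed
  thus ?thesis using a by (simp add: multiidx_def)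
qed

lemma finite_Dset: "finite (Dset m n)"
  by (rule finite_subset[OF _ finite_bounded[of m n]]) (unfold Dset_def, use bounded_deg[of _ m n] in blast)

lemma finite_Eset: "finite (Eset m n)"
  by (rule finite_subset[OF _ finite_bounded[of m n]]) (unfold Eset_def, use bounded_deg[of _ m n] in force)

lemma up_multiidx: "i < m \<Longrightarrow> \<beta> \<in> multiidx m \<Longrightarrow> \<beta>(i := Suc (\<beta> i)) \<in> multiidx m"
  unfolding multiidx_def by auto

lemma up_deg: "i < m \<Longrightarrow> deg m (\<beta>(i := Suc (\<beta> i))) = Suc (deg m \<beta>)"
proof -
  assume i: "i < m"
  have "deg m (\<beta>(i := Suc (\<beta> i))) = (\<Sum>j<m. (if j = i then 1 else 0) + \<beta> j)"
    unfolding deg_def by (rule sum.cong) auto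
  also have "\<dots> = Suc (deg m \<beta>)" using i by (simp add: sum.distrib deg_def)
  finally show ?thesis .
qed

lemma up_monom: "i < m \<Longrightarrow> monom_pow m y (\<beta>(i := Suc (\<beta> i))) = y i * monom_pow m y \<beta>"
proof -
  assume i: "i < m"
  have "monom_pow m y (\<beta>(i := Suc (\<beta> i))) = (\<Prod>j<m. (if j = i then y j else 1) * y j ^ \<beta> j)"
    unfolding monom_pow_def by (rule prod.cong) auto
  also have "\<dots> = y i * monom_pow m y \<beta>" using i by (simp add: prod.distrib monom_pow_def)
  finally show ?thesis .
qed

lemma Dset_0: "Dset m 0 = {\<lambda>_. 0}"
proof
  show "Dset m 0 \<subseteq> {\<lambda>_. 0}"
  proof
    fix \<beta> assume "\<beta> \<in> Dset m 0"
    hence "\<forall>i\<ge>m. \<beta> i = 0" "\<forall>i<m. \<beta> i = 0"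
      by (auto simp: Dset_def multiidx_def deg_def)
    hence "\<beta> = (\<lambda>_. 0)" by (metis leI ext)
    thus "\<beta> \<in> {\<lambda>_. 0}" by simp
  qed
  show "{\<lambda>_. 0} \<subseteq> Dset m 0" by (simp add: Dset_def multiidx_def deg_def)
qed

lemma Eset_Suc: "Eset m (Suc n) = Eset m n \<union> Dset m n"
  unfolding Eset_def Dset_def by auto

lemma Eset_Dset_disj: "Eset m n \<inter> Dset m n = {}"
  unfolding Eset_def Dset_def by auto


lemma dval_BI: "x \<in> B \<Longrightarrow> 0 \<in> B \<Longrightarrow> 0 \<in> I \<Longrightarrow> dval I x \<in> B \<inter> I"
  unfolding dval_def by auto

lemma cval_dval: "x = cval I x + dval I x"
  unfolding cval_def dval_def by auto

lemma bseq_in_B: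
  assumes sub: "is_subring B" and I0: "0 \<in> I"
    and HG: "\<forall>x\<in>B\<inter>I. (\<forall>i<m. G x i \<in> B) \<and> x = (\<Sum>i<m. G x i * y i)"
    and fB: "f \<in> B"
  shows "\<forall>\<beta>. bseq I m G f n \<beta> \<in> B"
proof (induction n)
  case 0 then show ?case using fB sub by (simp add: is_subring_def)
next
  case (Suc n)
  have B0: "0 \<in> B" using sub by (simp add: is_subring_def)
  show ?case
  proof
    fix \<gamma>
    have "\<forall>\<beta>\<in>Dset m n. \<forall>i\<in>{..<m}. (if \<beta>(i := Suc (\<beta> i)) = \<gamma> then G (dval I (bseq I m G f n \<beta>)) i else 0) \<in> B"
      using HG dval_BI[OF _ B0 I0] Suc B0 by auto
    thus "bseq I m G f (Suc n) \<gamma> \<in> B"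
      by (simp, intro subring_sum[OF sub] ballI) simp
  qed
qed

lemma key_step:
  assumes HG: "\<forall>x\<in>B\<inter>I. (\<forall>i<m. G x i \<in> B) \<and> x = (\<Sum>i<m. G x i * y i)"
    and bB: "\<forall>\<beta>. bseq I m G f n \<beta> \<in> B" and B0: "0 \<in> B" and I0: "0 \<in> I"
  shows "(\<Sum>\<gamma>\<in>Dset m (Suc n). bseq I m G f (Suc n) \<gamma> * monom_pow m y \<gamma>)
       = (\<Sum>\<beta>\<in>Dset m n. dval I (bseq I m G f n \<beta>) * monom_pow m y \<beta>)"
proof -
  define d where "d \<beta> = dval I (bseq I m G f n \<beta>)" for \<beta>
  define P where "P \<gamma> = monom_pow m y \<gamma>" for \<gamma>
  let ?D = "Dset m n" and ?D' = "Dset m (Suc n)"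
  have upD: "\<beta>(i := Suc (\<beta> i)) \<in> ?D'" if "\<beta> \<in> ?D" "i < m" for \<beta> i
    using that up_multiidx up_deg unfolding Dset_def by auto
  have "(\<Sum>\<gamma>\<in>?D'. bseq I m G f (Suc n) \<gamma> * P \<gamma>)
      = (\<Sum>\<gamma>\<in>?D'. \<Sum>\<beta>\<in>?D. \<Sum>i<m. (if \<beta>(i := Suc (\<beta> i)) = \<gamma> then G (d \<beta>) i * P \<gamma> else 0))"
    by (rule sum.cong) (auto simp: sum_distrib_right d_def intro!: sum.cong)
  also have "\<dots> = (\<Sum>\<beta>\<in>?D. \<Sum>\<gamma>\<in>?D'. \<Sum>i<m. (if \<beta>(i := Suc (\<beta> i)) = \<gamma> then G (d \<beta>) i * P \<gamma> else 0))"
    by (rule sum.swap)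
  also have "\<dots> = (\<Sum>\<beta>\<in>?D. \<Sum>i<m. \<Sum>\<gamma>\<in>?D'. (if \<beta>(i := Suc (\<beta> i)) = \<gamma> then G (d \<beta>) i * P \<gamma> else 0))"
    by (rule sum.cong[OF refl], rule sum.swap)
  also have "\<dots> = (\<Sum>\<beta>\<in>?D. \<Sum>i<m. G (d \<beta>) i * P (\<beta>(i := Suc (\<beta> i))))"
    by (rule sum.cong[OF refl], rule sum.cong[OF refl]) (simp add: finite_Dset upD)
  also have "\<dots> = (\<Sum>\<beta>\<in>?D. (\<Sum>i<m. G (d \<beta>) i * y i) * P \<beta>)"
    by (rule sum.cong[OF refl]) (simp add: sum_distrib_right P_def up_monom mult.assoc)
  also have "\<dots> = (\<Sum>\<beta>\<in>?D. d \<beta> * P \<beta>)"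
  proof (rule sum.cong[OF refl])
    fix \<beta> have "d \<beta> \<in> B \<inter> I" unfolding d_def using dval_BI bB B0 I0 by blast
    thus "(\<Sum>i<m. G (d \<beta>) i * y i) * P \<beta> = d \<beta> * P \<beta>" using HG by metis
  qed
  finally show ?thesis unfolding d_def P_def .
qed


lemma invariant:
  assumes sub: "is_subring B" and I0: "0 \<in> I"
    and HG: "\<forall>x\<in>B\<inter>I. (\<forall>i<m. G x i \<in> B) \<and> x = (\<Sum>i<m. G x i * y i)"
    and fB: "f \<in> B"
  shows "f = (\<Sum>\<beta>\<in>Eset m n. cval I (bseq I m G f (deg m \<beta>) \<beta>) * monom_pow m y \<beta>)
           + (\<Sum>\<beta>\<in>Dset m n. bseq I m G f n \<beta> * monom_pow m y \<beta>)"
proof (induction n)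
  case 0
  have "Eset m 0 = {}" by (simp add: Eset_def)
  thus ?case by (simp add: Dset_0 monom_pow_def)
next
  case (Suc n)
  have B0: "0 \<in> B" using sub by (simp add: is_subring_def)
  define c where "c \<beta> = cval I (bseq I m G f (deg m \<beta>) \<beta>) * monom_pow m y \<beta>" for \<beta>
  have bB: "\<forall>\<beta>. bseq I m G f n \<beta> \<in> B" by (rule bseq_in_B[OF sub I0 HG fB])
  have "(\<Sum>\<beta>\<in>Dset m n. bseq I m G f n \<beta> * monom_pow m y \<beta>)
      = (\<Sum>\<beta>\<in>Dset m n. c \<beta> + dval I (bseq I m G f n \<beta>) * monom_pow m y \<beta>)"
  proof (rule sum.cong[OF refl])
    fix \<beta> assume "\<beta> \<in> Dset m n"
    hence "deg m \<beta> = n" by (simp add: Dset_def)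
    thus "bseq I m G f n \<beta> * monom_pow m y \<beta> = c \<beta> + dval I (bseq I m G f n \<beta>) * monom_pow m y \<beta>"
      unfolding c_def using cval_dval[of "bseq I m G f n \<beta>" I] by (metis distrib_right)
  qed
  also have "\<dots> = (\<Sum>\<beta>\<in>Dset m n. c \<beta>) + (\<Sum>\<gamma>\<in>Dset m (Suc n). bseq I m G f (Suc n) \<gamma> * monom_pow m y \<gamma>)"
    by (simp only: sum.distrib key_step[OF HG bB B0 I0])
  finally have e: "(\<Sum>\<beta>\<in>Dset m n. bseq I m G f n \<beta> * monom_pow m y \<beta>) = \<dots>" .
  have e2: "(\<Sum>\<beta>\<in>Eset m (Suc n). c \<beta>) = (\<Sum>\<beta>\<in>Eset m n. c \<beta>) + (\<Sum>\<beta>\<in>Dset m n. c \<beta>)"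
    unfolding Eset_Suc by (rule sum.union_disjoint) (auto simp: finite_Eset finite_Dset Eset_Dset_disj)
  from Suc.IH have "f = (\<Sum>\<beta>\<in>Eset m n. c \<beta>) + (\<Sum>\<beta>\<in>Dset m n. bseq I m G f n \<beta> * monom_pow m y \<beta>)"
    by (simp add: c_def)
  then show ?case using e e2 by (simp add: c_def add.assoc)
qed

theorem mainTheorem18:
  fixes I B :: "'a::comm_ring_1 set" and y :: "nat \<Rightarrow> 'a" and m :: nat
  assumes "noetherian_ring TYPE('a)"
    and "I = ideal_gen_in UNIV (y ` {..<m})"
    and "is_subring B"
    and "\<forall>i<m. y i \<in> B"
    and "B \<inter> I = ideal_gen_in B (y ` {..<m})"
  shows "\<forall>f\<in>B. \<exists>c :: (nat \<Rightarrow> nat) \<Rightarrow> 'a.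
           (\<forall>\<beta>\<in>multiidx m. c \<beta> \<in> ((UNIV - I) \<inter> B) \<union> {0})
         \<and> adic_has_sum I (\<lambda>\<beta>. c \<beta> * monom_pow m y \<beta>) (multiidx m) f"
proof
  fix f assume fB: "f \<in> B"
  note Idef = assms(2) and sub = assms(3) and yB = assms(4) and BI = assms(5)
  have Iid: "is_ideal_in UNIV I" unfolding Idef by (rule ideal_gen_ideal)
  have I0: "0 \<in> I" using ideal_zero[OF Iid] .
  have yI: "\<forall>i<m. y i \<in> I" unfolding Idef by (auto intro: ideal_genI)
  have "\<forall>x. \<exists>g. x \<in> B \<inter> I \<longrightarrow> (\<forall>i<m. g i \<in> B) \<and> x = (\<Sum>i<m. g i * y i)"
  proof
    fix x show "\<exists>g. x \<in> B \<inter> I \<longrightarrow> (\<forall>i<m. g i \<in> B) \<and> x = (\<Sum>i<m. g i * y i)"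
    proof (cases "x \<in> B \<inter> I")
      case True
      hence "x \<in> {\<Sum>i<m. g i * y i | g. \<forall>i<m. g i \<in> B}" using gen_repr[OF sub yB] BI by blast
      thus ?thesis by blast
    qed auto
  qed
  then obtain G where HG0: "\<forall>x. x \<in> B \<inter> I \<longrightarrow> (\<forall>i<m. G x i \<in> B) \<and> x = (\<Sum>i<m. G x i * y i)"
    by metis
  hence HG: "\<forall>x\<in>B\<inter>I. (\<forall>i<m. G x i \<in> B) \<and> x = (\<Sum>i<m. G x i * y i)" by blast
  define c where "c \<beta> = cval I (bseq I m G f (deg m \<beta>) \<beta>)" for \<beta>
  have monI: "monom_pow m y \<beta> \<in> ideal_pow I k" if "k \<le> deg m \<beta>" for \<beta> k
    using prod_in_pow[OF yI, of \<beta>] ideal_pow_anti[OF that, of I]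
    unfolding monom_pow_def deg_def by blast
  show "\<exists>c :: (nat \<Rightarrow> nat) \<Rightarrow> 'a.
           (\<forall>\<beta>\<in>multiidx m. c \<beta> \<in> ((UNIV - I) \<inter> B) \<union> {0})
         \<and> adic_has_sum I (\<lambda>\<beta>. c \<beta> * monom_pow m y \<beta>) (multiidx m) f"
  proof (intro exI conjI)
    show "\<forall>\<beta>\<in>multiidx m. c \<beta> \<in> ((UNIV - I) \<inter> B) \<union> {0}"
      using bseq_in_B[OF sub I0 HG fB] unfolding c_def cval_def by auto
    show "adic_has_sum I (\<lambda>\<beta>. c \<beta> * monom_pow m y \<beta>) (multiidx m) f"
      unfolding adic_has_sum_def
    proof
      fix n
      show "\<exists>F0. finite F0 \<and> F0 \<subseteq> multiidx m \<and>
        (\<forall>F. finite F \<and> F0 \<subseteq> F \<and> F \<subseteq> multiidx m \<longrightarrow> f - (\<Sum>\<beta>\<in>F. c \<beta> * monom_pow m y \<beta>) \<in> ideal_pow I n)"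
      proof (intro exI conjI allI impI)
        show "finite (Eset m n)" by (rule finite_Eset)
        show "Eset m n \<subseteq> multiidx m" by (auto simp: Eset_def)
        fix F assume F: "finite F \<and> Eset m n \<subseteq> F \<and> F \<subseteq> multiidx m"
        let ?t = "\<lambda>\<beta>. c \<beta> * monom_pow m y \<beta>"
        let ?R = "\<Sum>\<beta>\<in>Dset m n. bseq I m G f n \<beta> * monom_pow m y \<beta>"
        have inv: "f = sum ?t (Eset m n) + ?R"
          using invariant[OF sub I0 HG fB, of n] unfolding c_def by simp
        have split: "sum ?t F = sum ?t (F - Eset m n) + sum ?t (Eset m n)"
          using F by (intro sum.subset_diff) auto
        have R: "?R \<in> ideal_pow I n"
          by (rule ideal_sum[OF ideal_pow_ideal], auto simp: Dset_def intro!: ideal_mult[OF ideal_pow_ideal] monI)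
        have T: "sum ?t (F - Eset m n) \<in> ideal_pow I n"
        proof (rule ideal_sum[OF ideal_pow_ideal], rule ballI)
          fix \<beta> assume "\<beta> \<in> F - Eset m n"
          hence "n \<le> deg m \<beta>" using F by (auto simp: Eset_def)
          thus "?t \<beta> \<in> ideal_pow I n" by (intro ideal_mult[OF ideal_pow_ideal] monI)
        qed
        have "f - sum ?t F = ?R - sum ?t (F - Eset m n)"
          using inv split by (simp add: algebra_simps)
        thus "f - sum ?t F \<in> ideal_pow I n" using R T ideal_diff[OF ideal_pow_ideal] by simp
      qed
    qed
  qed
qed

end
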